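(* In the setting described in the context, let $0<h<h_\circ$ and $\mathcal D_{v,\circ}^h=\{x\in\mathbb R^d:1/2\le\Phi_v^h(x)\le2\}$. Then $|\nabla\Phi_v^h(x)|\ge 1/(20d)$ for all $x\in\mathcal D_{v,\circ}^h$.
   Context: $B_r$ is the open ball of radius $r$ centered at $0$ in $\mathbb R^d$, $2\le d\le4$. Let $\phi:\mathbb R^d\to\mathbb R$ coincide on $[-1,1]^d$ with an analytic convex function of finite type defined on $[-2,2]^d$ and vanish outside $[-1,1]^d$; finite type means there are an integer $k\ge2$ and $m>0$ with $\sum_{j=2}^k\frac1{j!}|(u\cdot\nabla)^j\phi(x)|\ge m$ for all $x\in[-1,1]^d$ and unit vectors $u$. For $v\in\mathbb R^d$ with $-v\in\nabla\phi(B_{1/4})$, let $\omega_v\in B_{1/4}$ be the unique point with $\nabla\phi(\omega_v)=-v$ and $\Phi_v(x)=\phi(x+\omega_v)+v\cdot x-\phi(\omega_v)$. There is $c_\phi>0$ with $(c_\phi|x|)^k\le\Phi_v(x)$ on $B_{1/2}$ for all such $v$; fix $0<h_\circ\le(c_\phi/4)^k$. For $0<h<h_\circ$ let $\mathcal B_v^h=\{x\in B_{1/2}:\Phi_v(x)<h/2\}$, let $T_v^h$ be an invertible affine map of $\mathbb R^d$ with $B_1\subset(T_v^h)^{-1}\mathcal B_v^h\subset B_d$, and set $\Phi_v^h(x)=h^{-1}\Phi_v(T_v^hx)$. Standing assumption: $h_\circ$ is small enough that every $\Phi_v^h$ is defined, convex and of finite type on a ball $B_{R_\circ}$ with $R_\circ\ge100d$.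 *)

theory Defs
  imports "HOL-Analysis.Analysis"
begin

definition multi_indices :: "('a::euclidean_space \<Rightarrow> nat) set" where
  "multi_indices = {\<alpha>. \<forall>i. i \<notin> Basis \<longrightarrow> \<alpha> i = 0}"

text \<open>Real analyticity: near every point, f is the (unconditionally, hence absolutely,
  convergent) sum of a multivariate power series in the coordinates.\<close>
definition real_analytic_on :: "('a::euclidean_space \<Rightarrow> real) \<Rightarrow> 'a set \<Rightarrow> bool" where
  "real_analytic_on f S \<longleftrightarrow>
     (\<forall>x0\<in>S. \<exists>r>0. \<exists>c :: ('a \<Rightarrow> nat) \<Rightarrow> real. \<forall>x\<in>ball x0 r.
        ((\<lambda>\<alpha>. c \<alpha> * (\<Prod>i\<in>Basis. ((x - x0) \<bullet> i) ^ \<alpha> i)) has_sum f x) multi_indices)"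

definition grad :: "('a::euclidean_space \<Rightarrow> real) \<Rightarrow> 'a \<Rightarrow> 'a" where
  "grad f x = (THE g. (f has_derivative (\<lambda>y. g \<bullet> y)) (at x))"

definition dir_deriv :: "('a::euclidean_space \<Rightarrow> real) \<Rightarrow> 'a \<Rightarrow> 'a \<Rightarrow> nat \<Rightarrow> real" where
  "dir_deriv f x u j = (deriv ^^ j) (\<lambda>t::real. f (x + t *\<^sub>R u)) 0"

definition finite_type_on :: "'a set \<Rightarrow> ('a::euclidean_space \<Rightarrow> real) \<Rightarrow> nat \<Rightarrow> real \<Rightarrow> bool" where
  "finite_type_on S f k m \<longleftrightarrow> 2 \<le> k \<and> 0 < m \<and>
     (\<forall>x\<in>S. \<forall>u. norm u = 1 \<longrightarrow> m \<le> (\<Sum>j=2..k. \<bar>dir_deriv f x u j\<bar> / fact j))"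

definition invertible_affine :: "('a::euclidean_space \<Rightarrow> 'a) \<Rightarrow> bool" where
  "invertible_affine T \<longleftrightarrow> (\<exists>A b. linear A \<and> bij A \<and> (\<forall>y. T y = A y + b))"

definition admissible :: "('a::euclidean_space \<Rightarrow> real) \<Rightarrow> 'a \<Rightarrow> bool" where
  "admissible phi v \<longleftrightarrow> - v \<in> grad phi ` ball 0 (1/4)"

definition omega :: "('a::euclidean_space \<Rightarrow> real) \<Rightarrow> 'a \<Rightarrow> 'a" where
  "omega phi v = (THE w. w \<in> ball 0 (1/4) \<and> grad phi w = - v)"

definition Phi_v :: "('a::euclidean_space \<Rightarrow> real) \<Rightarrow> 'a \<Rightarrow> 'a \<Rightarrow> real" where
  "Phi_v phi v x = phi (x + omega phi v) + v \<bullet> x - phi (omega phi v)"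

definition B_vh :: "('a::euclidean_space \<Rightarrow> real) \<Rightarrow> 'a \<Rightarrow> real \<Rightarrow> 'a set" where
  "B_vh phi v h = {x \<in> ball 0 (1/2). Phi_v phi v x < h / 2}"

text \<open>T is the family of chosen affine normalisations T_v^h.\<close>
definition Phi_vh :: "('a::euclidean_space \<Rightarrow> real) \<Rightarrow> ('a \<Rightarrow> real \<Rightarrow> 'a \<Rightarrow> 'a) \<Rightarrow> 'a \<Rightarrow> real \<Rightarrow> 'a \<Rightarrow> real" where
  "Phi_vh phi T v h x = Phi_v phi v (T v h x) / h"

definition D_vh :: "('a::euclidean_space \<Rightarrow> real) \<Rightarrow> ('a \<Rightarrow> real \<Rightarrow> 'a \<Rightarrow> 'a) \<Rightarrow> 'a \<Rightarrow> real \<Rightarrow> 'a set" where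
  "D_vh phi T v h = {x. 1/2 \<le> Phi_vh phi T v h x \<and> Phi_vh phi T v h x \<le> 2}"

end

theory Submission
  imports Defs
begin

lemma One_inner_Basis: "i \<in> (Basis::'a::euclidean_space set) \<Longrightarrow> (One::'a) \<bullet> i = 1"
  by (simp add: inner_sum_left inner_Basis sum.delta' if_distrib cong: if_cong)

lemma norm_One_le: "norm (One::'a::euclidean_space) \<le> real DIM('a)"
proof -
  have "norm (One::'a) \<le> (\<Sum>i\<in>Basis. norm (i::'a))" by (rule norm_sum)
  also have "\<dots> = real DIM('a)" by simp
  finally show ?thesis .
qed

lemma deg_cases:
  fixes \<alpha> :: "'a::euclidean_space \<Rightarrow> nat"
  assumes "\<alpha> \<in> multi_indices" "(\<Sum>i\<in>Basis. \<alpha> i) \<le> 1"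
  shows "\<alpha> = (\<lambda>_. 0) \<or> (\<exists>i\<in>Basis. \<alpha> = (\<lambda>j. if j = i then 1 else 0))"
proof (cases "\<forall>i\<in>Basis. \<alpha> i = 0")
  case True
  then have "\<alpha> = (\<lambda>_. 0)" using assms(1) unfolding multi_indices_def by auto
  then show ?thesis by blast
next
  case False
  then obtain i where i: "i \<in> Basis" "\<alpha> i \<noteq> 0" by blast
  have s: "(\<Sum>j\<in>Basis. \<alpha> j) = \<alpha> i + (\<Sum>j\<in>Basis - {i}. \<alpha> j)"
    using i(1) by (simp add: sum.remove)
  have le: "\<alpha> i + (\<Sum>j\<in>Basis - {i}. \<alpha> j) \<le> 1" using s assms(2) by linarith
  from le i(2) have a1: "\<alpha> i = 1" and r: "(\<Sum>j\<in>Basis - {i}. \<alpha> j) = 0" by linarith+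
  from r have "\<forall>j\<in>Basis - {i}. \<alpha> j = 0" by (simp add: sum_eq_0_iff)
  with a1 assms(1) have "\<alpha> = (\<lambda>j. if j = i then 1 else 0)"
    unfolding multi_indices_def by (auto intro!: ext) (metis DiffI singletonD)
  with i show ?thesis by blast
qed

lemma analytic_differentiable:
  fixes f :: "'a::euclidean_space \<Rightarrow> real"
  assumes an: "real_analytic_on f S" and x0: "x0 \<in> S"
  shows "\<exists>g. (f has_derivative (\<lambda>y. g \<bullet> y)) (at x0)"
proof -
  define mono where "mono h \<alpha> = (\<Prod>i\<in>Basis. (h \<bullet> i) ^ \<alpha> i)" for h :: 'a and \<alpha> :: "'a \<Rightarrow> nat"
  define deg where "deg \<alpha> = (\<Sum>i\<in>(Basis::'a set). \<alpha> i)" for \<alpha> :: "'a \<Rightarrow> nat"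
  define e where "e i = (\<lambda>j. if j = i then 1 else (0::nat))" for i :: 'a
  obtain r c where r: "r > 0" and hs0: "\<forall>x\<in>ball x0 r.
      ((\<lambda>\<alpha>. c \<alpha> * (\<Prod>i\<in>Basis. ((x - x0) \<bullet> i) ^ \<alpha> i)) has_sum f x) multi_indices"
    using an x0 unfolding real_analytic_on_def by blast
  have hs: "((\<lambda>\<alpha>. c \<alpha> * mono (x - x0) \<alpha>) has_sum f x) multi_indices" if "x \<in> ball x0 r" for x
    using hs0 that unfolding mono_def by blast
  define \<rho> where "\<rho> = r / (2 * real DIM('a))"
  have \<rho>: "\<rho> > 0" using r by (simp add: \<rho>_def)
  have D1: "1 \<le> real DIM('a)" using DIM_positive[where 'a='a] by linarith
  have "\<rho> \<le> r / 2" unfolding \<rho>_def using r D1 by (intro divide_left_mono) auto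
  then have \<rho>r: "\<rho> < r" using r by linarith
  have "norm (\<rho> *\<^sub>R (One::'a)) \<le> r / 2"
  proof -
    have "norm (\<rho> *\<^sub>R (One::'a)) = \<rho> * norm (One::'a)" using \<rho> by simp
    also have "\<dots> \<le> \<rho> * real DIM('a)" using \<rho> norm_One_le[where 'a='a] by (intro mult_left_mono) auto
    also have "\<dots> = r / 2" unfolding \<rho>_def using DIM_positive[where 'a='a] by (simp add: field_simps)
    finally show ?thesis .
  qed
  then have "x0 + \<rho> *\<^sub>R One \<in> ball x0 r" using r by (simp add: dist_norm)
  from hs[OF this] have "((\<lambda>\<alpha>. c \<alpha> * mono (\<rho> *\<^sub>R One) \<alpha>) has_sum f (x0 + \<rho> *\<^sub>R One)) multi_indices"
    by simp
  moreover have "mono (\<rho> *\<^sub>R One) \<alpha> = \<rho> ^ deg \<alpha>" for \<alpha>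
    unfolding mono_def deg_def power_sum by (intro prod.cong) (auto simp: One_inner_Basis)
  ultimately have "(\<lambda>\<alpha>. c \<alpha> * \<rho> ^ deg \<alpha>) summable_on multi_indices"
    by (auto simp: summable_on_def)
  then have "(\<lambda>\<alpha>. norm (c \<alpha> * \<rho> ^ deg \<alpha>)) summable_on multi_indices"
    by (rule summable_on_iff_abs_summable_on_real[THEN iffD1])
  then have Ksum: "(\<lambda>\<alpha>. \<bar>c \<alpha>\<bar> * \<rho> ^ deg \<alpha>) summable_on multi_indices"
    using \<rho> by (simp add: abs_mult)
  define K where "K = infsum (\<lambda>\<alpha>. \<bar>c \<alpha>\<bar> * \<rho> ^ deg \<alpha>) multi_indices"
  define Z :: "('a \<Rightarrow> nat) set" where "Z = {(\<lambda>_. 0::nat)}"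
  define M1 where "M1 = e ` Basis"
  define M2 where "M2 = multi_indices - (Z \<union> M1)"
  define g where "g = (\<Sum>i\<in>Basis. c (e i) *\<^sub>R i)"
  have injE: "inj_on e Basis"
  proof (rule inj_onI)
    fix i j assume "e i = e j"
    then have "e i i = e j i" by simp
    then show "i = j" by (simp add: e_def split: if_splits)
  qed
  have ZM1: "Z \<inter> M1 = {}"
  proof -
    have "(\<lambda>_. 0) \<noteq> e i" for i
    proof
      assume "(\<lambda>_. 0) = e i"
      then have "(0::nat) = e i i" by (rule fun_cong)
      then show False by (simp add: e_def)
    qed
    then show ?thesis unfolding Z_def M1_def by auto
  qed
  have ZM1sub: "Z \<union> M1 \<subseteq> multi_indices"
    unfolding Z_def M1_def e_def multi_indices_def by auto
  have finZM1: "finite (Z \<union> M1)" unfolding Z_def M1_def by simp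
  have degM2: "2 \<le> deg \<alpha>" if "\<alpha> \<in> M2" for \<alpha>
  proof (rule ccontr)
    assume "\<not> 2 \<le> deg \<alpha>"
    then have "deg \<alpha> \<le> 1" by simp
    with that deg_cases[of \<alpha>] have "\<alpha> \<in> Z \<union> M1"
      unfolding M2_def deg_def Z_def M1_def e_def by auto
    with that show False unfolding M2_def by auto
  qed
  have mono0: "mono h (\<lambda>_. 0) = 1" for h unfolding mono_def by simp
  have monoe: "mono h (e i) = h \<bullet> i" if "i \<in> Basis" for h i
  proof -
    have "mono h (e i) = (\<Prod>j\<in>Basis. if j = i then h \<bullet> j else 1)"
      unfolding mono_def e_def by (intro prod.cong) auto
    also have "\<dots> = h \<bullet> i" using that by (simp add: prod.delta')
    finally show ?thesis .
  qed
  have main: "\<bar>f (x0 + h) - c (\<lambda>_. 0) - g \<bullet> h\<bar> \<le> (norm h / \<rho>)^2 * K" if h: "norm h \<le> \<rho>" for h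
  proof -
    have "x0 + h \<in> ball x0 r" using h \<rho>r by (simp add: dist_norm)
    from hs[OF this] have H: "((\<lambda>\<alpha>. c \<alpha> * mono h \<alpha>) has_sum f (x0 + h)) multi_indices" by simp
    then have "(\<lambda>\<alpha>. norm (c \<alpha> * mono h \<alpha>)) summable_on multi_indices"
      using summable_on_iff_abs_summable_on_real[THEN iffD1] summable_on_def by blast
    then have absM2: "(\<lambda>\<alpha>. norm (c \<alpha> * mono h \<alpha>)) summable_on M2"
      by (rule summable_on_subset) (auto simp: M2_def)
    then have sM2: "(\<lambda>\<alpha>. c \<alpha> * mono h \<alpha>) summable_on M2"
      by (rule summable_on_iff_abs_summable_on_real[THEN iffD2])
    define R where "R = infsum (\<lambda>\<alpha>. c \<alpha> * mono h \<alpha>) M2"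
    have HR: "((\<lambda>\<alpha>. c \<alpha> * mono h \<alpha>) has_sum R) M2" using sM2 unfolding R_def by simp
    have HF: "((\<lambda>\<alpha>. c \<alpha> * mono h \<alpha>) has_sum (\<Sum>\<alpha>\<in>Z \<union> M1. c \<alpha> * mono h \<alpha>)) (Z \<union> M1)"
      using finZM1 by simp
    have "((\<lambda>\<alpha>. c \<alpha> * mono h \<alpha>) has_sum ((\<Sum>\<alpha>\<in>Z \<union> M1. c \<alpha> * mono h \<alpha>) + R)) ((Z \<union> M1) \<union> M2)"
      by (rule has_sum_Un_disjoint[OF HF HR]) (auto simp: M2_def)
    moreover have "(Z \<union> M1) \<union> M2 = multi_indices" using ZM1sub unfolding M2_def by auto
    ultimately have eq: "f (x0 + h) = (\<Sum>\<alpha>\<in>Z \<union> M1. c \<alpha> * mono h \<alpha>) + R"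
      using H has_sum_unique by metis
    have "(\<Sum>\<alpha>\<in>Z \<union> M1. c \<alpha> * mono h \<alpha>) = (\<Sum>\<alpha>\<in>Z. c \<alpha> * mono h \<alpha>) + (\<Sum>\<alpha>\<in>M1. c \<alpha> * mono h \<alpha>)"
      using ZM1 finZM1 by (intro sum.union_disjoint) auto
    also have "(\<Sum>\<alpha>\<in>Z. c \<alpha> * mono h \<alpha>) = c (\<lambda>_. 0)" unfolding Z_def using mono0 by simp
    also have "(\<Sum>\<alpha>\<in>M1. c \<alpha> * mono h \<alpha>) = (\<Sum>i\<in>Basis. c (e i) * mono h (e i))"
      unfolding M1_def by (rule sum.reindex[OF injE, unfolded comp_def])
    also have "\<dots> = g \<bullet> h" unfolding g_def inner_sum_left
      by (intro sum.cong) (auto simp: monoe inner_commute)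
    finally have eq2: "f (x0 + h) - c (\<lambda>_. 0) - g \<bullet> h = R" using eq by simp
    have "\<bar>R\<bar> \<le> infsum (\<lambda>\<alpha>. norm (c \<alpha> * mono h \<alpha>)) M2"
      unfolding R_def using norm_infsum_bound[OF absM2] by simp
    also have "\<dots> \<le> infsum (\<lambda>\<alpha>. (norm h / \<rho>)^2 * (\<bar>c \<alpha>\<bar> * \<rho> ^ deg \<alpha>)) M2"
    proof (rule infsum_mono)
      show "(\<lambda>\<alpha>. norm (c \<alpha> * mono h \<alpha>)) summable_on M2" using absM2 .
      show "(\<lambda>\<alpha>. (norm h / \<rho>)^2 * (\<bar>c \<alpha>\<bar> * \<rho> ^ deg \<alpha>)) summable_on M2"
        by (intro summable_on_cmult_right summable_on_subset[OF Ksum]) (auto simp: M2_def)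
      fix \<alpha> assume a: "\<alpha> \<in> M2"
      have "\<bar>mono h \<alpha>\<bar> = (\<Prod>i\<in>Basis. \<bar>h \<bullet> i\<bar> ^ \<alpha> i)"
        unfolding mono_def by (simp add: abs_prod power_abs)
      also have "\<dots> \<le> (\<Prod>i\<in>Basis. norm h ^ \<alpha> i)"
        by (intro prod_mono) (auto intro: power_mono Basis_le_norm)
      also have "\<dots> = norm h ^ deg \<alpha>" unfolding deg_def power_sum ..
      also have "\<dots> = (norm h / \<rho>) ^ deg \<alpha> * \<rho> ^ deg \<alpha>"
        using \<rho> by (simp add: power_divide)
      also have "\<dots> \<le> (norm h / \<rho>)^2 * \<rho> ^ deg \<alpha>"
        using degM2[OF a] h \<rho> by (intro mult_right_mono power_decreasing) auto
      finally have "\<bar>mono h \<alpha>\<bar> \<le> (norm h / \<rho>)^2 * \<rho> ^ deg \<alpha>" .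
      then have "\<bar>c \<alpha>\<bar> * \<bar>mono h \<alpha>\<bar> \<le> \<bar>c \<alpha>\<bar> * ((norm h / \<rho>)^2 * \<rho> ^ deg \<alpha>)"
        by (intro mult_left_mono) auto
      then show "norm (c \<alpha> * mono h \<alpha>) \<le> (norm h / \<rho>)^2 * (\<bar>c \<alpha>\<bar> * \<rho> ^ deg \<alpha>)"
        by (simp add: abs_mult mult_ac)
    qed
    also have "\<dots> = (norm h / \<rho>)^2 * infsum (\<lambda>\<alpha>. \<bar>c \<alpha>\<bar> * \<rho> ^ deg \<alpha>) M2"
      by (rule infsum_cmult_right) (intro summable_on_subset[OF Ksum], auto simp: M2_def)
    also have "\<dots> \<le> (norm h / \<rho>)^2 * K"
      unfolding K_def
    proof (intro mult_left_mono)
      show "infsum (\<lambda>\<alpha>. \<bar>c \<alpha>\<bar> * \<rho> ^ deg \<alpha>) M2 \<le> infsum (\<lambda>\<alpha>. \<bar>c \<alpha>\<bar> * \<rho> ^ deg \<alpha>) multi_indices"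
        by (rule has_sum_mono'[OF has_sum_infsum has_sum_infsum])
           (use \<rho> Ksum in \<open>auto simp: M2_def intro: summable_on_subset[OF Ksum]\<close>)
    qed simp
    finally show ?thesis using eq2 by simp
  qed
  have K0: "K \<ge> 0" unfolding K_def using \<rho> by (intro infsum_nonneg) auto
  have fx0: "f x0 = c (\<lambda>_. 0)" using main[of 0] \<rho> by simp
  have "(f has_derivative (\<lambda>y. g \<bullet> y)) (at x0)"
    unfolding has_derivative_at_alt
  proof (intro conjI allI impI)
    show "bounded_linear ((\<bullet>) g)" by (rule bounded_linear_inner_right)
    fix \<epsilon> :: real assume \<epsilon>: "\<epsilon> > 0"
    define d where "d = min \<rho> (\<epsilon> * \<rho>^2 / (K + 1))"
    have d: "d > 0" using \<rho> \<epsilon> K0 by (simp add: d_def)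
    show "\<exists>d>0. \<forall>y. norm (y - x0) < d \<longrightarrow> norm (f y - f x0 - g \<bullet> (y - x0)) \<le> \<epsilon> * norm (y - x0)"
    proof (intro exI[of _ d] conjI allI impI d)
      fix y assume y: "norm (y - x0) < d"
      define h where "h = y - x0"
      have h1: "norm h \<le> \<rho>" using y unfolding h_def d_def by simp
      have h2: "norm h * (K + 1) \<le> \<epsilon> * \<rho>^2"
        using y K0 unfolding h_def d_def by (simp add: field_simps)
      have "\<bar>f y - f x0 - g \<bullet> h\<bar> \<le> (norm h / \<rho>)^2 * K"
        using main[OF h1] fx0 unfolding h_def by simp
      also have "\<dots> = norm h * (norm h * K / \<rho>^2)" using \<rho> by (simp add: power2_eq_square field_simps)
      also have "\<dots> \<le> norm h * \<epsilon>"
      proof (rule mult_left_mono)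
        have "norm h * K \<le> norm h * (K + 1)" by (simp add: mult_left_mono)
        also have "\<dots> \<le> \<epsilon> * \<rho>^2" by (rule h2)
        finally show "norm h * K / \<rho>^2 \<le> \<epsilon>" using \<rho> by (simp add: field_simps)
      qed simp
      finally show "norm (f y - f x0 - g \<bullet> (y - x0)) \<le> \<epsilon> * norm (y - x0)"
        unfolding h_def by (simp add: mult.commute)
    qed
  qed
  then show ?thesis by blast
qed

lemma convex_tangent:
  fixes F :: "'a::euclidean_space \<Rightarrow> real"
  assumes cv: "convex_on S F" and xS: "x \<in> S" and zS: "z \<in> S"
    and der: "(F has_derivative (\<lambda>y. G \<bullet> y)) (at x)"
  shows "G \<bullet> (z - x) \<le> F z - F x"
proof (rule field_le_epsilon)
  fix e :: real assume e: "0 < e"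
  define N where "N = norm (z - x) + 1"
  have N: "N > 0" "norm (z - x) \<le> N" unfolding N_def by (auto intro: add_nonneg_pos)
  have eN: "e / N > 0" using e N by simp
  from der[unfolded has_derivative_at_alt] have
    "\<forall>e>0. \<exists>d>0. \<forall>y. norm (y - x) < d \<longrightarrow> norm (F y - F x - G \<bullet> (y - x)) \<le> e * norm (y - x)"
    by blast
  from this[rule_format, OF eN] obtain d where d: "d > 0"
    and dd0: "\<forall>y. norm (y - x) < d \<longrightarrow> norm (F y - F x - G \<bullet> (y - x)) \<le> (e / N) * norm (y - x)"
    by blast
  have dd: "\<bar>F y - F x - G \<bullet> (y - x)\<bar> \<le> (e / N) * norm (y - x)" if "norm (y - x) < d" for y
    using dd0 that by simp
  define t where "t = min 1 (d / (2 * N))"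
  have t: "0 < t" "t \<le> 1" using d N unfolding t_def by auto
  define y where "y = (1 - t) *\<^sub>R x + t *\<^sub>R z"
  have yx: "y - x = t *\<^sub>R (z - x)" unfolding y_def by (simp add: algebra_simps)
  have ny: "norm (y - x) = t * norm (z - x)" using t by (simp add: yx)
  have "norm (y - x) = t * norm (z - x)" by (rule ny)
  also have "\<dots> \<le> t * N" using t N by (intro mult_left_mono) auto
  also have "\<dots> \<le> (d / (2 * N)) * N" using N by (intro mult_right_mono) (auto simp: t_def)
  also have "\<dots> = d / 2" using N by simp
  finally have yd: "norm (y - x) < d" using d by linarith
  have cvx: "F y \<le> (1 - t) * F x + t * F z"
    unfolding y_def using convex_onD[OF cv, of t x z] t xS zS by auto
  have "t * (G \<bullet> (z - x)) = G \<bullet> (y - x)" by (simp add: yx)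
  also have "\<dots> \<le> F y - F x + (e / N) * norm (y - x)" using dd[OF yd] by linarith
  also have "\<dots> \<le> t * (F z - F x) + (e / N) * (t * norm (z - x))"
    using cvx t unfolding ny by (simp add: algebra_simps)
  also have "\<dots> \<le> t * (F z - F x + e)"
  proof -
    have "(e / N) * norm (z - x) \<le> e" using N e by (simp add: field_simps)
    then have "(e / N) * (t * norm (z - x)) \<le> t * e" using t
      by (metis mult.left_commute mult_left_mono less_imp_le)
    then show ?thesis by (simp add: algebra_simps)
  qed
  finally show "G \<bullet> (z - x) \<le> F z - F x + e" using t by simp
qed

theorem lemma4p5:
  fixes phi phit :: "'a::euclidean_space \<Rightarrow> real"
    and k :: nat and m c h0 R0 h :: real
    and T :: "'a \<Rightarrow> real \<Rightarrow> 'a \<Rightarrow> 'a"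
    and v x :: 'a
  assumes dim: "2 \<le> DIM('a)" "DIM('a) \<le> 4"
    and phit_analytic: "real_analytic_on phit (box (- (2 *\<^sub>R One)) (2 *\<^sub>R One))"
    and phit_convex: "convex_on (box (- (2 *\<^sub>R One)) (2 *\<^sub>R One)) phit"
    and phit_type: "finite_type_on (cbox (- One) One) phit k m"
    and phi_eq: "\<And>y. phi y = (if y \<in> cbox (- One) One then phit y else 0)"
    and c_pos: "0 < c"
    and c_bound: "\<And>w y. admissible phi w \<Longrightarrow> y \<in> ball 0 (1/2) \<Longrightarrow>
                      (c * norm y) ^ k \<le> Phi_v phi w y"
    and h0: "0 < h0" "h0 \<le> (c / 4) ^ k"
    and T_norm: "\<And>w h'. admissible phi w \<Longrightarrow> 0 < h' \<Longrightarrow> h' < h0 \<Longrightarrow>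
                    invertible_affine (T w h') \<and> ball 0 1 \<subseteq> T w h' -` B_vh phi w h'
                    \<and> T w h' -` B_vh phi w h' \<subseteq> ball 0 (real DIM('a))"
    and R0: "100 * real DIM('a) \<le> R0"
    and standing: "\<And>w h'. admissible phi w \<Longrightarrow> 0 < h' \<Longrightarrow> h' < h0 \<Longrightarrow>
                    (\<forall>y\<in>ball 0 R0. T w h' y + omega phi w \<in> box (- One) One)
                    \<and> convex_on (ball 0 R0) (Phi_vh phi T w h')
                    \<and> (\<exists>k' m'. finite_type_on (ball 0 R0) (Phi_vh phi T w h') k' m')"
    and v: "admissible phi v"
    and h: "0 < h" "h < h0"
    and x: "x \<in> D_vh phi T v h" "x \<in> ball 0 R0"
  shows "1 / (20 * real DIM('a)) \<le> norm (grad (Phi_vh phi T v h) x)"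
proof -
  define F where "F = Phi_vh phi T v h"
  define dd where "dd = real DIM('a)"
  define \<omega> where "\<omega> = omega phi v"
  have dd1: "1 \<le> dd" using dim(1) unfolding dd_def by simp
  from T_norm[OF v h] have Tinv: "invertible_affine (T v h)"
    and Tin: "ball 0 1 \<subseteq> T v h -` B_vh phi v h"
    and Tout: "T v h -` B_vh phi v h \<subseteq> ball 0 dd" unfolding dd_def by auto
  from standing[OF v h] have Tbox: "\<forall>y\<in>ball 0 R0. T v h y + \<omega> \<in> box (- One) One"
    and cvF: "convex_on (ball 0 R0) F" unfolding F_def \<omega>_def by auto
  from Tinv obtain A b where A: "linear A" "bij A" and Teq: "\<And>y. T v h y = A y + b"
    unfolding invertible_affine_def by blast
  have Taff: "T v h ((1 - s) *\<^sub>R p + s *\<^sub>R q) = (1 - s) *\<^sub>R T v h p + s *\<^sub>R T v h q" for s p q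
    unfolding Teq linear_add[OF A(1)] linear_scale[OF A(1)] by (simp add: algebra_simps)
  have Fdef: "F y = Phi_v phi v (T v h y) / h" for y unfolding F_def Phi_vh_def by simp
  have Phi0: "Phi_v phi v 0 = 0" unfolding Phi_v_def by simp
  obtain z0 where z0: "A z0 = - b" using A(2) by (metis bij_pointE)
  have Tz0: "T v h z0 = 0" using z0 Teq by simp
  have Fz0: "F z0 = 0" using Fdef Tz0 Phi0 by simp
  have "z0 \<in> T v h -` B_vh phi v h" using Tz0 Phi0 h unfolding B_vh_def by simp
  then have z0d: "norm z0 < dd" using Tout by auto
  have R0d: "100 * dd \<le> R0" using R0 unfolding dd_def .
  have z0R: "z0 \<in> ball 0 R0" using z0d R0d dd1 by simp
  have Fx: "1/2 \<le> F x" "F x \<le> 2" using x(1) unfolding D_vh_def F_def by auto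
  have outside: "1/2 \<le> F y" if yR: "y \<in> ball 0 R0" and yn: "y \<notin> T v h -` B_vh phi v h" for y
  proof (cases "h / 2 \<le> Phi_v phi v (T v h y)")
    case True
    then show ?thesis using h unfolding Fdef by (simp add: field_simps)
  next
    case False
    with yn have Ty: "1/2 \<le> norm (T v h y)" unfolding B_vh_def by auto
    define s where "s = 1 / (4 * norm (T v h y))"
    have s1: "0 < s" using Ty unfolding s_def by auto
    have "s \<le> 1 / (4 * (1/2))" unfolding s_def using Ty by (intro divide_left_mono) auto
    then have s: "0 < s" "s \<le> 1/2" using s1 by auto
    define ys where "ys = (1 - s) *\<^sub>R z0 + s *\<^sub>R y"
    have ysR: "ys \<in> ball 0 R0" unfolding ys_def
      using convex_ball[of "0::'a" R0] z0R yR s unfolding convex_alt by auto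
    have Tys: "T v h ys = s *\<^sub>R T v h y" unfolding ys_def Taff Tz0 by simp
    have nTys: "norm (T v h ys) = 1/4" unfolding Tys using s Ty by (simp add: s_def)
    have "(c * norm (T v h ys)) ^ k \<le> Phi_v phi v (T v h ys)"
      by (rule c_bound[OF v]) (simp add: nTys)
    then have "(c / 4) ^ k \<le> Phi_v phi v (T v h ys)" by (simp add: nTys)
    then have "h < Phi_v phi v (T v h ys)" using h h0 by linarith
    then have Fys: "1 < F ys" using h unfolding Fdef by (simp add: field_simps)
    have "F ys \<le> (1 - s) * F z0 + s * F y"
      unfolding ys_def using convex_onD[OF cvF, of s z0 y] s z0R yR by auto
    then have "F ys \<le> s * F y" using Fz0 by simp
    with Fys s have "1 < s * F y" by linarith
    then have "0 < s * F y" by linarith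
    then have "0 < F y" using s by (simp add: zero_less_mult_iff)
    then have "s * F y \<le> F y" using s by (simp add: mult_left_le_one_le)
    with \<open>1 < s * F y\<close> show ?thesis by linarith
  qed
  have p0: "T v h x + \<omega> \<in> box (- One) One" using Tbox x(2) by blast
  have p0': "T v h x + \<omega> \<in> box (- (2 *\<^sub>R One)) (2 *\<^sub>R One)"
    using p0 unfolding mem_box by (auto simp: One_inner_Basis inner_minus_left)
  obtain g where g: "(phit has_derivative (\<lambda>y. g \<bullet> y)) (at (T v h x + \<omega>))"
    using analytic_differentiable[OF phit_analytic p0'] by blast
  have gphi: "(phi has_derivative (\<lambda>y. g \<bullet> y)) (at (T v h x + \<omega>))"
  proof (rule has_derivative_transform_within_open[OF g open_box p0])
    fix y assume "y \<in> box (- One) (One::'a)"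
    then have "y \<in> cbox (- One) One" using box_subset_cbox by blast
    then show "phit y = phi y" using phi_eq by simp
  qed
  have Ffun: "F = (\<lambda>y. (phi (A y + b + \<omega>) + v \<bullet> (A y + b) - phi \<omega>) / h)"
    by (rule ext) (simp add: Fdef Phi_v_def Teq \<omega>_def)
  have blA: "bounded_linear A" using A(1) by (simp add: linear_conv_bounded_linear)
  have dA: "((\<lambda>y. A y + b + \<omega>) has_derivative A) (at x)"
    using blA by (auto intro!: derivative_eq_intros bounded_linear.has_derivative[OF blA])
  have dphi: "((\<lambda>y. phi (A y + b + \<omega>)) has_derivative (\<lambda>u. g \<bullet> A u)) (at x)"
    using has_derivative_compose[OF dA, of phi "\<lambda>y. g \<bullet> y"] gphi Teq
    by (simp add: comp_def)
  have dlin: "((\<lambda>y. v \<bullet> (A y + b)) has_derivative (\<lambda>u. v \<bullet> A u)) (at x)"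
    using blA by (auto intro!: derivative_eq_intros bounded_linear.has_derivative[OF blA])
  define G where "G = (1 / h) *\<^sub>R adjoint A (g + v)"
  have dF: "(F has_derivative (\<lambda>u. G \<bullet> u)) (at x)"
  proof -
    have "((\<lambda>y. (phi (A y + b + \<omega>) + v \<bullet> (A y + b) - phi \<omega>) / h) has_derivative
          (\<lambda>u. (g \<bullet> A u + v \<bullet> A u - 0) / h)) (at x)"
    proof -
      have d1: "((\<lambda>y. phi (A y + b + \<omega>) + v \<bullet> (A y + b) - phi \<omega>) has_derivative
          (\<lambda>u. g \<bullet> A u + v \<bullet> A u - 0)) (at x)"
        by (intro has_derivative_diff has_derivative_add dphi dlin has_derivative_const)
      show ?thesis using has_derivative_mult_left[OF d1, of "1/h"] by simp
    qed
    moreover have "(\<lambda>u. (g \<bullet> A u + v \<bullet> A u - 0) / h) = (\<lambda>u. G \<bullet> u)"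
    proof
      fix u
      have "g \<bullet> A u + v \<bullet> A u = A u \<bullet> (g + v)" by (simp add: inner_commute inner_add_right)
      also have "\<dots> = u \<bullet> adjoint A (g + v)" using adjoint_works[OF A(1)] by simp
      finally show "(g \<bullet> A u + v \<bullet> A u - 0) / h = G \<bullet> u"
        unfolding G_def by (simp add: inner_commute)
    qed
    ultimately show ?thesis unfolding Ffun by simp
  qed
  have gradG: "grad F x = G"
    unfolding grad_def
  proof (rule the_equality)
    show "(F has_derivative (\<bullet>) G) (at x)" using dF by simp
    fix g' assume "(F has_derivative (\<bullet>) g') (at x)"
    from has_derivative_unique[OF this dF] have "(\<lambda>u. g' \<bullet> u) = (\<lambda>u. G \<bullet> u)" by simp
    then have "g' \<bullet> (g' - G) = G \<bullet> (g' - G)" by metis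
    then have "(g' - G) \<bullet> (g' - G) = 0" by (simp add: inner_diff_left)
    then show "g' = G" by simp
  qed
  define L where "L = norm (x - z0)"
  have L8: "L \<le> 8 * dd"
  proof (rule ccontr)
    assume "\<not> L \<le> 8 * dd"
    then have L: "8 * dd < L" by simp
    define t where "t = 2 * dd / L"
    have t: "0 < t" "t < 1" using L dd1 unfolding t_def by (auto simp: field_simps)
    define y where "y = (1 - t) *\<^sub>R z0 + t *\<^sub>R x"
    have yz: "y - z0 = t *\<^sub>R (x - z0)" unfolding y_def by (simp add: algebra_simps)
    have Lp: "0 < L" using L dd1 by linarith
    have "norm (y - z0) = t * L" unfolding yz L_def using t by simp
    then have nyz: "norm (y - z0) = 2 * dd" using Lp unfolding t_def by simp
    have "norm (y - z0) \<le> norm y + norm z0" by (rule norm_triangle_ineq4)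
    then have "dd \<le> norm y" using nyz z0d by linarith
    then have yn: "y \<notin> T v h -` B_vh phi v h" using Tout by auto
    have yR: "y \<in> ball 0 R0" unfolding y_def
      using convex_ball[of "0::'a" R0] z0R x(2) t unfolding convex_alt by auto
    have "1/2 \<le> F y" by (rule outside[OF yR yn])
    also have "F y \<le> (1 - t) * F z0 + t * F x"
      unfolding y_def using convex_onD[OF cvF, of t z0 x] t z0R x(2) by auto
    also have "\<dots> = t * F x" using Fz0 by simp
    also have "\<dots> \<le> t * 2" using Fx t by (intro mult_left_mono) auto
    finally have "1/2 \<le> t * 2" .
    then have "1 \<le> 8 * dd / L" unfolding t_def by simp
    then have "L \<le> 8 * dd" using Lp by (simp add: field_simps)
    then show False using L dd1 by linarith
  qed
  have tan: "G \<bullet> (z0 - x) \<le> F z0 - F x"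
    by (rule convex_tangent[OF cvF x(2) z0R dF])
  then have "1/2 \<le> G \<bullet> (x - z0)" using Fz0 Fx
    by (simp add: inner_diff_right)
  also have "\<dots> \<le> norm G * L" unfolding L_def by (rule norm_cauchy_schwarz)
  also have "\<dots> \<le> norm G * (8 * dd)" using L8 by (intro mult_left_mono) auto
  finally have "1 / (16 * dd) \<le> norm G" using dd1 by (simp add: field_simps)
  moreover have "1 / (20 * dd) \<le> 1 / (16 * dd)" using dd1 by (simp add: field_simps)
  ultimately show ?thesis using gradG unfolding F_def dd_def by simp
qed

end
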